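(* Let $n\ge3$ and $s\ge1$ be integers. Then $p_{2s}(n,2sd)\to\infty$ as $d\to\infty$.
   Context: $\mathbb{R}[x_1,\dots,x_n]_e$ denotes the real vector space of homogeneous polynomials (forms) of degree $e$ in $n$ variables. For integers $n,m,d\ge1$, let $\Sigma^m_{n,md}\subset\mathbb{R}[x_1,\dots,x_n]_{md}$ be the set of forms $f=\sum_{i=1}^r f_i^m$ with $r\in\mathbb{N}$ and $f_i\in\mathbb{R}[x_1,\dots,x_n]_d$. The homogeneous Pythagoras number $p_m(n,md)$ is the minimal $\ell$ such that every $f\in\Sigma^m_{n,md}$ admits such a representation with $r\le\ell$. *)

theory Defs
  imports Complex_Main "HOL-Library.Poly_Mapping" "HOL-Library.Extended_Nat"
begin

text \<open>Real polynomials in the variables x_0, x_1, ... : a monomial is a finitely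
supported exponent vector (type nat =>0 nat), a polynomial is a finitely supported
coefficient map on monomials.\<close>

type_synonym rpoly = "(nat \<Rightarrow>\<^sub>0 nat) \<Rightarrow>\<^sub>0 real"

definition mon_deg :: "(nat \<Rightarrow>\<^sub>0 nat) \<Rightarrow> nat" where
  "mon_deg m = (\<Sum>i\<in>Poly_Mapping.keys m. Poly_Mapping.lookup m i)"

definition is_form :: "nat \<Rightarrow> nat \<Rightarrow> rpoly \<Rightarrow> bool" where
  "is_form n e f \<longleftrightarrow> (\<forall>m\<in>Poly_Mapping.keys f. mon_deg m = e \<and> (\<forall>i\<in>Poly_Mapping.keys m. i < n))"

definition sum_powers_rep :: "nat \<Rightarrow> nat \<Rightarrow> nat \<Rightarrow> nat \<Rightarrow> rpoly \<Rightarrow> bool" where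
  "sum_powers_rep m n d r f \<longleftrightarrow>
     (\<exists>fs. length fs = r \<and> (\<forall>g\<in>set fs. is_form n d g) \<and> f = sum_list (map (\<lambda>g. g ^ m) fs))"

definition SigmaPow :: "nat \<Rightarrow> nat \<Rightarrow> nat \<Rightarrow> rpoly set" where
  "SigmaPow m n d = {f. \<exists>r. sum_powers_rep m n d r f}"

text \<open>Homogeneous Pythagoras number p_m(n, md) (infinity if no finite bound exists).\<close>
definition pyth :: "nat \<Rightarrow> nat \<Rightarrow> nat \<Rightarrow> enat" where
  "pyth m n d = Inf {enat l | l. \<forall>f\<in>SigmaPow m n d. \<exists>r\<le>l. sum_powers_rep m n d r f}"

end

theory Submission
  imports Defs "HOL-Analysis.Analysis" "HOL-Computational_Algebra.Polynomial"
begin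

definition mv :: "(nat \<Rightarrow>\<^sub>0 nat) \<Rightarrow> (nat \<Rightarrow> real) \<Rightarrow> real" where
  "mv k x = (\<Prod>i\<in>Poly_Mapping.keys k. x i ^ Poly_Mapping.lookup k i)"

definition ev :: "rpoly \<Rightarrow> (nat \<Rightarrow> real) \<Rightarrow> real" where
  "ev p x = (\<Sum>k\<in>Poly_Mapping.keys p. Poly_Mapping.lookup p k * mv k x)"

lemma mv_superset:
  assumes "finite S" "Poly_Mapping.keys k \<subseteq> S"
  shows "mv k x = (\<Prod>i\<in>S. x i ^ Poly_Mapping.lookup k i)"
  unfolding mv_def
  by (rule prod.mono_neutral_left) (use assms in \<open>auto simp: in_keys_iff\<close>)

lemma keys_add_nat: "Poly_Mapping.keys (a + b) = Poly_Mapping.keys a \<union> Poly_Mapping.keys (b :: nat \<Rightarrow>\<^sub>0 nat)"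
  by (auto simp: in_keys_iff lookup_add)

lemma mv_add: "mv (a + b) x = mv a x * mv b x"
proof -
  let ?S = "Poly_Mapping.keys a \<union> Poly_Mapping.keys b"
  have "mv (a+b) x = (\<Prod>i\<in>?S. x i ^ Poly_Mapping.lookup (a+b) i)"
    by (rule mv_superset) (auto simp: keys_add_nat)
  also have "\<dots> = (\<Prod>i\<in>?S. x i ^ Poly_Mapping.lookup a i) * (\<Prod>i\<in>?S. x i ^ Poly_Mapping.lookup b i)"
    by (simp add: lookup_add power_add prod.distrib)
  also have "\<dots> = mv a x * mv b x"
    by (simp add: mv_superset[symmetric])
  finally show ?thesis .
qed

lemma mv_zero[simp]: "mv 0 x = 1"
  by (simp add: mv_def)

lemma ev_superset:
  assumes "finite S" "Poly_Mapping.keys p \<subseteq> S"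
  shows "ev p x = (\<Sum>k\<in>S. Poly_Mapping.lookup p k * mv k x)"
  unfolding ev_def
  by (rule sum.mono_neutral_left) (use assms in \<open>auto simp: in_keys_iff\<close>)

lemma ev_add: "ev (p + q) x = ev p x + ev q x"
proof -
  let ?S = "Poly_Mapping.keys p \<union> Poly_Mapping.keys q"
  have "ev (p+q) x = (\<Sum>k\<in>?S. Poly_Mapping.lookup (p+q) k * mv k x)"
    by (rule ev_superset) (auto dest: subsetD[OF keys_add])
  also have "\<dots> = (\<Sum>k\<in>?S. Poly_Mapping.lookup p k * mv k x) + (\<Sum>k\<in>?S. Poly_Mapping.lookup q k * mv k x)"
    by (simp add: lookup_add distrib_right sum.distrib)
  also have "\<dots> = ev p x + ev q x"
    by (simp add: ev_superset[symmetric])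
  finally show ?thesis .
qed

lemma ev_zero[simp]: "ev 0 x = 0"
  by (simp add: ev_def)

lemma ev_sum: "ev (sum f A) x = (\<Sum>a\<in>A. ev (f a) x)"
  by (induction A rule: infinite_finite_induct) (auto simp: ev_add)

lemma ev_single: "ev (Poly_Mapping.single k c) x = c * mv k x"
  by (simp add: ev_def)

lemma poly_expand: "p = (\<Sum>k\<in>Poly_Mapping.keys p. Poly_Mapping.single k (Poly_Mapping.lookup p k))"
  by (rule poly_mapping_eqI) (simp add: lookup_sum lookup_single when_def in_keys_iff sum.delta)

lemma ev_mult: "ev (p * q) x = ev p x * ev (q :: rpoly) x"
proof -
  let ?P = "Poly_Mapping.keys p" and ?Q = "Poly_Mapping.keys q"
  let ?lp = "Poly_Mapping.lookup p" and ?lq = "Poly_Mapping.lookup q"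
  have "p * q = (\<Sum>a\<in>?P. Poly_Mapping.single a (?lp a)) * (\<Sum>b\<in>?Q. Poly_Mapping.single b (?lq b))"
    by (subst poly_expand[of p], subst poly_expand[of q]) (rule refl)
  also have "\<dots> = (\<Sum>a\<in>?P. \<Sum>b\<in>?Q. Poly_Mapping.single a (?lp a) * Poly_Mapping.single b (?lq b))"
    by (rule sum_product)
  also have "\<dots> = (\<Sum>a\<in>?P. \<Sum>b\<in>?Q. Poly_Mapping.single (a + b) (?lp a * ?lq b))"
    by (simp only: mult_single)
  finally have eq: "p * q = (\<Sum>a\<in>?P. \<Sum>b\<in>?Q. Poly_Mapping.single (a + b) (?lp a * ?lq b))" .
  have "ev (p*q) x = (\<Sum>a\<in>?P. \<Sum>b\<in>?Q. ?lp a * ?lq b * (mv a x * mv b x))"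
    by (simp only: eq ev_sum ev_single mv_add)
  also have "\<dots> = (\<Sum>a\<in>?P. \<Sum>b\<in>?Q. (?lp a * mv a x) * (?lq b * mv b x))"
    by (rule sum.cong[OF refl], rule sum.cong[OF refl]) (simp only: mult_ac)
  also have "\<dots> = ev p x * ev q x"
    by (simp only: ev_def sum_product)
  finally show ?thesis .
qed

lemma ev_one[simp]: "ev 1 x = 1"
  by (simp add: ev_def)

lemma ev_power: "ev (p ^ k) x = ev p x ^ k"
  by (induction k) (auto simp: ev_mult)

lemma ev_prod: "ev (prod f A) x = (\<Prod>a\<in>A. ev (f a) x)"
  by (induction A rule: infinite_finite_induct) (auto simp: ev_mult)

lemma ev_sum_list: "ev (sum_list (map f xs)) x = (\<Sum>i<length xs. ev (f (xs ! i)) x)"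
  by (induction xs) (simp_all add: ev_add sum.lessThan_Suc_shift del: sum.lessThan_Suc)

lemma mon_deg_superset:
  assumes "finite S" "Poly_Mapping.keys k \<subseteq> S"
  shows "mon_deg k = (\<Sum>i\<in>S. Poly_Mapping.lookup k i)"
  unfolding mon_deg_def
  by (rule sum.mono_neutral_left) (use assms in \<open>auto simp: in_keys_iff\<close>)

lemma mon_deg_add: "mon_deg (a + b) = mon_deg a + mon_deg b"
proof -
  let ?S = "Poly_Mapping.keys a \<union> Poly_Mapping.keys b"
  have "mon_deg (a+b) = (\<Sum>i\<in>?S. Poly_Mapping.lookup (a+b) i)"
    by (rule mon_deg_superset) (auto simp: keys_add_nat)
  also have "\<dots> = (\<Sum>i\<in>?S. Poly_Mapping.lookup a i) + (\<Sum>i\<in>?S. Poly_Mapping.lookup b i)"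
    by (simp add: lookup_add sum.distrib)
  also have "\<dots> = mon_deg a + mon_deg b"
    by (simp add: mon_deg_superset[symmetric])
  finally show ?thesis .
qed

lemma is_form_mult:
  assumes "is_form n a p" "is_form n b q"
  shows "is_form n (a + b) (p * q)"
  unfolding is_form_def
proof
  fix m assume "m \<in> Poly_Mapping.keys (p * q)"
  then have "m \<in> {x + y | x y. x \<in> Poly_Mapping.keys p \<and> y \<in> Poly_Mapping.keys q}"
    by (rule subsetD[OF keys_mult])
  then obtain u v where uv: "m = u + v" "u \<in> Poly_Mapping.keys p" "v \<in> Poly_Mapping.keys q"
    by blast
  have u: "mon_deg u = a" "\<forall>i\<in>Poly_Mapping.keys u. i < n" using uv(2) assms(1) unfolding is_form_def by blast+
  have v: "mon_deg v = b" "\<forall>i\<in>Poly_Mapping.keys v. i < n" using uv(3) assms(2) unfolding is_form_def by blast+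
  show "mon_deg m = a + b \<and> (\<forall>i\<in>Poly_Mapping.keys m. i < n)"
    unfolding uv(1) mon_deg_add keys_add_nat using u v by blast
qed

lemma is_form_add:
  assumes "is_form n a p" "is_form n a q"
  shows "is_form n a (p + q)"
  unfolding is_form_def
proof
  fix m assume "m \<in> Poly_Mapping.keys (p + q)"
  then have "m \<in> Poly_Mapping.keys p \<union> Poly_Mapping.keys q" by (rule subsetD[OF keys_add])
  then show "mon_deg m = a \<and> (\<forall>i\<in>Poly_Mapping.keys m. i < n)"
    using assms unfolding is_form_def by blast
qed

lemma is_form_one: "is_form n 0 1"
  by (simp add: is_form_def mon_deg_def)

lemma is_form_prod:
  assumes "finite S" "\<And>m. m \<in> S \<Longrightarrow> is_form n 1 (F m)"
  shows "is_form n (card S) (prod F S)"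
  using assms
proof (induction S rule: finite_induct)
  case empty then show ?case by (simp add: is_form_one)
next
  case (insert x S)
  then show ?case using is_form_mult[of n 1 "F x" "card S" "prod F S"] by simp
qed

lemma is_form_power:
  assumes "is_form n a p"
  shows "is_form n (a * k) (p ^ k)"
proof (induction k)
  case 0 then show ?case by (simp add: is_form_one)
next
  case (Suc k)
  have "is_form n (a + a * k) (p * p ^ k)" by (rule is_form_mult[OF assms Suc])
  then show ?case by simp
qed

lemma is_form_var:
  assumes "i < n"
  shows "is_form n 1 (Poly_Mapping.single (Poly_Mapping.single i 1) c)"
  using assms by (simp add: is_form_def mon_deg_def)


definition pf :: "nat \<Rightarrow> (real \<Rightarrow> real) \<Rightarrow> bool" where
  "pf k F \<longleftrightarrow> (\<exists>Q. Polynomial.degree Q \<le> k \<and> (\<forall>t. F t = poly Q t))"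

lemma pf_const: "pf k (\<lambda>t. c)"
  unfolding pf_def by (rule exI[of _ "[:c:]"]) simp

lemma pf_mono: "pf a F \<Longrightarrow> a \<le> b \<Longrightarrow> pf b F"
  unfolding pf_def by (meson order_trans)

lemma pf_add: "pf k F \<Longrightarrow> pf k G \<Longrightarrow> pf k (\<lambda>t. F t + G t)"
  unfolding pf_def
proof (elim exE conjE)
  fix P Q assume "Polynomial.degree P \<le> k" "\<forall>t. F t = poly P t" "Polynomial.degree Q \<le> k" "\<forall>t. G t = poly Q t"
  then show "\<exists>R. Polynomial.degree R \<le> k \<and> (\<forall>t. F t + G t = poly R t)"
    by (intro exI[of _ "P + Q"]) (auto intro: order_trans[OF degree_add_le_max])
qed

lemma pf_mult: "pf a F \<Longrightarrow> pf b G \<Longrightarrow> pf (a + b) (\<lambda>t. F t * G t)"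
  unfolding pf_def
proof (elim exE conjE)
  fix P Q assume "Polynomial.degree P \<le> a" "\<forall>t. F t = poly P t" "Polynomial.degree Q \<le> b" "\<forall>t. G t = poly Q t"
  then show "\<exists>R. Polynomial.degree R \<le> a + b \<and> (\<forall>t. F t * G t = poly R t)"
    by (intro exI[of _ "P * Q"]) (auto intro: order_trans[OF degree_mult_le])
qed

lemma pf_sum: "finite A \<Longrightarrow> (\<And>x. x \<in> A \<Longrightarrow> pf k (F x)) \<Longrightarrow> pf k (\<lambda>t. \<Sum>x\<in>A. F x t)"
  by (induction A rule: finite_induct) (auto simp: pf_const intro: pf_add)

lemma pf_prod: "finite A \<Longrightarrow> (\<And>x. x \<in> A \<Longrightarrow> pf (k x) (F x)) \<Longrightarrow> pf (\<Sum>x\<in>A. k x) (\<lambda>t. \<Prod>x\<in>A. F x t)"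
proof (induction A rule: finite_induct)
  case empty then show ?case by (simp add: pf_const)
next
  case (insert x A)
  then show ?case using pf_mult[of "k x" "F x" "sum k A" "\<lambda>t. \<Prod>x\<in>A. F x t"] by simp
qed

lemma pf_power: "pf a F \<Longrightarrow> pf (a * e) (\<lambda>t. F t ^ e)"
proof (induction e)
  case 0 then show ?case by (simp add: pf_const)
next
  case (Suc e)
  then show ?case using pf_mult[of a F "a * e" "\<lambda>t. F t ^ e"] by simp
qed

lemma pf_ev:
  assumes "\<And>i. pf 1 (\<lambda>t. \<phi> t i)" "\<And>m. m \<in> Poly_Mapping.keys g \<Longrightarrow> mon_deg m \<le> d"
  shows "pf d (\<lambda>t. ev g (\<phi> t))"
proof -
  have "pf d (\<lambda>t. \<Sum>m\<in>Poly_Mapping.keys g. Poly_Mapping.lookup g m * mv m (\<phi> t))"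
  proof (rule pf_sum)
    fix m assume m: "m \<in> Poly_Mapping.keys g"
    have "pf (\<Sum>i\<in>Poly_Mapping.keys m. 1 * Poly_Mapping.lookup m i) (\<lambda>t. \<Prod>i\<in>Poly_Mapping.keys m. \<phi> t i ^ Poly_Mapping.lookup m i)"
      by (rule pf_prod) (use pf_power[OF assms(1)] in auto)
    then have "pf (mon_deg m) (\<lambda>t. mv m (\<phi> t))"
      by (simp add: mon_deg_def mv_def)
    then have "pf (0 + mon_deg m) (\<lambda>t. Poly_Mapping.lookup g m * mv m (\<phi> t))"
      by (rule pf_mult[OF pf_const])
    then show "pf d (\<lambda>t. Poly_Mapping.lookup g m * mv m (\<phi> t))"
      using assms(2)[OF m] by (auto intro: pf_mono)
  qed simp
  then show ?thesis by (simp add: ev_def)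
qed

definition Lf :: "nat \<Rightarrow> real \<times> real \<Rightarrow> real" where
  "Lf l z = fst z + real l * snd z + (real l)^2"

definition Hf :: "nat \<Rightarrow> nat \<Rightarrow> real \<times> real \<Rightarrow> real" where
  "Hf d m z = (\<Prod>l\<in>{0..d}-{m}. Lf l z)"

definition gam :: "nat \<Rightarrow> real \<Rightarrow> real \<times> real" where
  "gam j t = ( - ((real j)^2) - real j * t, t)"

lemma Lf_gam: "Lf l (gam j t) = (real l - real j) * (t + real l + real j)"
  by (simp add: Lf_def gam_def algebra_simps power2_eq_square)

lemma Hf_gam_other: "m \<noteq> j \<Longrightarrow> j \<le> d \<Longrightarrow> Hf d m (gam j t) = 0"
  unfolding Hf_def by (rule prod_zero) (auto simp: Lf_gam intro!: bexI[of _ j])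

lemma Hf_gam_self: "Hf d j (gam j t) = (\<Prod>l\<in>{0..d}-{j}. (real l - real j) * (t + real l + real j))"
  unfolding Hf_def by (simp add: Lf_gam)

lemma sum_even_pow_eq_0:
  assumes "finite A" "(\<Sum>i\<in>A. f i ^ (2 * s)) = (0::real)" "s \<ge> 1" "i \<in> A"
  shows "f i = 0"
proof -
  have "\<forall>i\<in>A. f i ^ (2 * s) = 0"
    using assms(2) by (subst sum_nonneg_eq_0_iff[symmetric]) (auto simp: assms(1))
  then show ?thesis using assms(3,4) by auto
qed

lemma S1:
  fixes G :: "nat \<Rightarrow> real \<times> real \<Rightarrow> real"
  assumes s: "s \<ge> 1" and i: "i < r" and j: "j \<le> d"
  assumes polyres: "pf d (\<lambda>t. G i (gam j t))"
  assumes ident: "\<And>z. (\<Sum>i<r. G i z ^ (2 * s)) = (\<Sum>m\<in>{0..d}. Hf d m z ^ (2 * s))"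
  shows "\<exists>c. \<forall>t. G i (gam j t) = c * Hf d j (gam j t)"
proof -
  define S where "S = {0..d}-{j}"
  have finS: "finite S" and cardS: "card S = d" using j by (auto simp: S_def)
  obtain Q where Q: "Polynomial.degree Q \<le> d" "\<And>t. G i (gam j t) = poly Q t"
    using polyres unfolding pf_def by blast
  define P where "P = (\<Prod>l\<in>S. [:real l + real j, 1:])"
  have polyP: "poly P t = (\<Prod>l\<in>S. t + real l + real j)" for t
    by (simp add: P_def poly_prod algebra_simps)
  have degP: "Polynomial.degree P = d"
    unfolding P_def by (subst degree_prod_eq_sum_degree) (auto simp: cardS)
  have lcP: "Polynomial.coeff P d = 1"
    using degP lead_coeff_prod[of "\<lambda>l. [:real l + real j, 1:]" S] unfolding P_def by simp
  define A where "A = (\<lambda>l. -(real l + real j)) ` S"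
  have cardA: "card A = d"
    unfolding A_def by (subst card_image) (auto simp: inj_on_def cardS)
  have root: "G i (gam j t) = 0" if "t \<in> A" for t
  proof -
    obtain l where l: "l \<in> S" "t = -(real l + real j)" using \<open>t \<in> A\<close> unfolding A_def by blast
    have "Hf d m (gam j t) = 0" if "m \<in> {0..d}" for m
    proof (cases "m = j")
      case True
      show ?thesis unfolding True Hf_gam_self
        by (intro prod_zero bexI[of _ l]) (use l S_def in auto)
    qed (use j Hf_gam_other in auto)
    then have "(\<Sum>i<r. G i (gam j t) ^ (2 * s)) = 0" using s by (simp add: ident)
    then show ?thesis using sum_even_pow_eq_0[where f="\<lambda>i. G i (gam j t)" and A="{..<r}" and s=s and i=i] s i by auto
  qed
  have QP: "Q = Polynomial.smult (Polynomial.coeff Q d) P"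
  proof (rule poly_eqI_degree_lead_coeff[where n=d and A=A])
    show "Polynomial.coeff Q d = Polynomial.coeff (Polynomial.smult (Polynomial.coeff Q d) P) d" by (simp add: lcP)
    show "d \<le> card A" by (simp add: cardA)
    show "Polynomial.degree Q \<le> d" by (rule Q)
    show "Polynomial.degree (Polynomial.smult (Polynomial.coeff Q d) P) \<le> d" using degP by simp
    fix z assume "z \<in> A"
    then obtain l where l: "l \<in> S" "z = -(real l + real j)" unfolding A_def by blast
    have "poly P z = 0" unfolding polyP by (intro prod_zero bexI[of _ l]) (use l finS in auto)
    then show "poly Q z = poly (Polynomial.smult (Polynomial.coeff Q d) P) z"
      using root[OF \<open>z \<in> A\<close>] Q(2) by simp
  qed
  define K where "K = (\<Prod>l\<in>S. real l - real j)"
  have K0: "K \<noteq> 0" unfolding K_def using finS by (auto simp: S_def)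
  have HK: "Hf d j (gam j t) = K * poly P t" for t
    unfolding Hf_gam_self K_def polyP S_def[symmetric] by (simp add: prod.distrib)
  show ?thesis
  proof (intro exI allI)
    fix t
    have "G i (gam j t) = Polynomial.coeff Q d * poly P t" using Q(2) QP by (metis poly_smult)
    also have "\<dots> = (Polynomial.coeff Q d / K) * Hf d j (gam j t)" using K0 by (simp add: HK)
    finally show "G i (gam j t) = (Polynomial.coeff Q d / K) * Hf d j (gam j t)" .
  qed
qed


definition uj :: "nat \<Rightarrow> real \<times> real" where "uj j = ( - real j, 1)"
definition qq :: "nat \<Rightarrow> nat \<Rightarrow> real \<times> real" where "qq j k = (real j * real k, - (real j + real k))"
definition dd :: "(real \<times> real \<Rightarrow> real) \<Rightarrow> real \<times> real \<Rightarrow> real \<times> real \<Rightarrow> real" where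
  "dd F z w = frechet_derivative F (at z) w"

lemma gam_deriv: "(gam j has_derivative (\<lambda>h. h *\<^sub>R uj j)) (at t)"
proof -
  have "((\<lambda>t. ( - ((real j)^2) - real j * t, t)) has_derivative (\<lambda>h. ( - (real j * h), h))) (at t)"
    by (rule has_derivative_Pair) (auto intro!: derivative_eq_intros)
  moreover have "(\<lambda>h. ( - (real j * h), h)) = (\<lambda>h. h *\<^sub>R uj j)"
    by (auto simp: uj_def)
  ultimately show ?thesis by (simp add: gam_def[abs_def])
qed

lemma gam_qq1: "gam j ( - (real j + real k)) = qq j k"
  by (simp add: gam_def qq_def algebra_simps power2_eq_square)

lemma gam_qq2: "gam k ( - (real j + real k)) = qq j k"
  by (simp add: gam_def qq_def algebra_simps power2_eq_square)

lemma dd_works: "F differentiable (at z) \<Longrightarrow> (F has_derivative dd F z) (at z)"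
  unfolding dd_def[abs_def] by (simp add: frechet_derivative_works)

lemma dd_lin:
  assumes "F differentiable (at z)"
  shows "dd F z (a *\<^sub>R v + b *\<^sub>R w) = a * dd F z v + b * dd F z w"
proof -
  have "linear (dd F z)" using has_derivative_bounded_linear[OF dd_works[OF assms]] bounded_linear.linear by blast
  then show ?thesis by (simp add: linear_add linear_scale)
qed

lemma dir_deriv:
  assumes "F differentiable (at (gam j t0))"
  shows "((\<lambda>t. F (gam j t)) has_field_derivative dd F (gam j t0) (uj j)) (at t0)"
proof -
  have "((F \<circ> gam j) has_derivative (dd F (gam j t0) \<circ> (\<lambda>h. h *\<^sub>R uj j))) (at t0)"
    by (rule diff_chain_at[OF gam_deriv dd_works[OF assms]])
  moreover have "(dd F (gam j t0) \<circ> (\<lambda>h. h *\<^sub>R uj j)) = (*) (dd F (gam j t0) (uj j))"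
  proof
    fix h
    have "dd F (gam j t0) (h *\<^sub>R uj j + 0 *\<^sub>R uj j) = h * dd F (gam j t0) (uj j) + 0 * dd F (gam j t0) (uj j)"
      by (rule dd_lin[OF assms])
    then show "(dd F (gam j t0) \<circ> (\<lambda>h. h *\<^sub>R uj j)) h = (*) (dd F (gam j t0) (uj j)) h" by (simp add: mult.commute)
  qed
  ultimately show ?thesis by (simp add: has_field_derivative_def comp_def)
qed

lemma lead:
  fixes F H :: "nat \<Rightarrow> real \<times> real \<Rightarrow> real"
  assumes fI: "finite I" and fM: "finite M"
  and dF: "\<And>i. i \<in> I \<Longrightarrow> (F i has_derivative DF i) (at q)"
  and dH: "\<And>m. m \<in> M \<Longrightarrow> (H m has_derivative DH m) (at q)"
  and F0: "\<And>i. i \<in> I \<Longrightarrow> F i q = 0" and H0: "\<And>m. m \<in> M \<Longrightarrow> H m q = 0"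
  and id: "\<And>z. (\<Sum>i\<in>I. F i z ^ e) = (\<Sum>m\<in>M. H m z ^ e)"
  shows "(\<Sum>i\<in>I. DF i w ^ e) = (\<Sum>m\<in>M. DH m w ^ e)"
proof -
  have line: "((\<lambda>t::real. q + t *\<^sub>R w) has_derivative (\<lambda>h. h *\<^sub>R w)) (at 0)"
    by (auto intro!: derivative_eq_intros)
  have quot: "((\<lambda>t. K (q + t *\<^sub>R w) / t) \<longlongrightarrow> DK w) (at 0)"
    if dK: "(K has_derivative DK) (at q)" and K0: "K q = 0" for K DK
  proof -
    have lin: "linear DK" using has_derivative_bounded_linear[OF dK] bounded_linear.linear by blast
    have "((K \<circ> (\<lambda>t. q + t *\<^sub>R w)) has_derivative (DK \<circ> (\<lambda>h. h *\<^sub>R w))) (at 0)"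
      by (rule diff_chain_at[OF line]) (simp add: dK)
    moreover have "(DK \<circ> (\<lambda>h. h *\<^sub>R w)) = (*) (DK w)"
      by (auto simp: lin linear_scale mult.commute)
    ultimately have "((\<lambda>t. K (q + t *\<^sub>R w)) has_field_derivative DK w) (at 0)"
      by (simp add: has_field_derivative_def comp_def)
    then show ?thesis by (simp add: has_field_derivative_iff K0)
  qed
  have t1: "((\<lambda>t. \<Sum>i\<in>I. (F i (q + t *\<^sub>R w) / t) ^ e) \<longlongrightarrow> (\<Sum>i\<in>I. DF i w ^ e)) (at 0)"
    by (intro tendsto_sum tendsto_power quot dF F0)
  have t2: "((\<lambda>t. \<Sum>m\<in>M. (H m (q + t *\<^sub>R w) / t) ^ e) \<longlongrightarrow> (\<Sum>m\<in>M. DH m w ^ e)) (at 0)"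
    by (intro tendsto_sum tendsto_power quot dH H0)
  have eq: "(\<Sum>i\<in>I. (F i (q + t *\<^sub>R w) / t) ^ e) = (\<Sum>m\<in>M. (H m (q + t *\<^sub>R w) / t) ^ e)" for t
    by (simp add: power_divide sum_divide_distrib[symmetric] id)
  show ?thesis
    by (rule tendsto_unique[OF at_neq_bot t1]) (simp add: eq t2)
qed

lemma fst_diff: "fst differentiable (at (z::real\<times>real))"
  by (rule bounded_linear_imp_differentiable[OF bounded_linear_fst])

lemma snd_diff: "snd differentiable (at (z::real\<times>real))"
  by (rule bounded_linear_imp_differentiable[OF bounded_linear_snd])

lemma Lf_diff: "Lf l differentiable (at z)"
  unfolding Lf_def[abs_def] by (auto intro!: derivative_intros fst_diff snd_diff)

lemma prod_diff:
  fixes f :: "nat \<Rightarrow> real \<times> real \<Rightarrow> real"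
  shows "finite A \<Longrightarrow> (\<And>x. x \<in> A \<Longrightarrow> f x differentiable (at z)) \<Longrightarrow> (\<lambda>y. \<Prod>x\<in>A. f x y) differentiable (at z)"
  by (induction A rule: finite_induct) (auto intro!: differentiable_mult)

lemma Hf_diff: "Hf d m differentiable (at z)"
  unfolding Hf_def[abs_def] by (rule prod_diff) (auto intro: Lf_diff)

lemma S2c:
  assumes "j \<le> d" "k \<le> d" "j \<noteq> k"
  shows "dd (Hf d j) (qq j k) (uj j) \<noteq> 0"
proof -
  define t0 where "t0 = - (real j + real k)"
  define S where "S = {0..d}-{j}"
  have kS: "k \<in> S" and finS: "finite S" using assms by (auto simp: S_def)
  define R where "R t = (real k - real j) * (\<Prod>l\<in>S-{k}. (real l - real j) * (t + real l + real j))" for t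
  have HR: "Hf d j (gam j t) = (t - t0) * R t" for t
  proof -
    have "Hf d j (gam j t) = (\<Prod>l\<in>S. (real l - real j) * (t + real l + real j))"
      unfolding Hf_gam_self S_def ..
    also have "\<dots> = ((real k - real j) * (t + real k + real j)) * (\<Prod>l\<in>S-{k}. (real l - real j) * (t + real l + real j))"
      using prod.remove[OF finS kS] by simp
    also have "\<dots> = (t - t0) * R t" by (simp add: R_def t0_def algebra_simps)
    finally show ?thesis .
  qed
  have Rc: "(R \<longlongrightarrow> R t0) (at t0)"
    unfolding R_def[abs_def] by (intro tendsto_intros)
  have "((\<lambda>t. (t - t0) * R t) has_field_derivative R t0) (at t0)"
    unfolding has_field_derivative_iff
  proof (rule Lim_transform_within[OF Rc zero_less_one])
    fix x assume "0 < dist x t0" "dist x t0 < 1"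
    then have "x \<noteq> t0" by auto
    then show "R x = ((x - t0) * R x - (t0 - t0) * R t0) / (x - t0)" by simp
  qed
  then have d1: "((\<lambda>t. Hf d j (gam j t)) has_field_derivative R t0) (at t0)"
    by (simp add: HR)
  have d2: "((\<lambda>t. Hf d j (gam j t)) has_field_derivative dd (Hf d j) (qq j k) (uj j)) (at t0)"
  proof -
    have g: "gam j t0 = qq j k" unfolding t0_def by (rule gam_qq1)
    show ?thesis using dir_deriv[of "Hf d j" j t0, OF Hf_diff] by (simp only: g)
  qed
  have "R t0 \<noteq> 0"
    unfolding R_def t0_def using assms finS by (auto simp: S_def)
  then show ?thesis using DERIV_unique[OF d1 d2] by simp
qed


lemma dep:
  fixes v :: "'a \<Rightarrow> nat \<Rightarrow> real"
  shows "finite J \<Longrightarrow> r < card J \<Longrightarrow> \<exists>lam. (\<exists>j\<in>J. lam j \<noteq> 0) \<and> (\<forall>i<r. (\<Sum>j\<in>J. lam j * v j i) = 0)"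
proof (induction r arbitrary: J v)
  case 0
  then obtain j where "j \<in> J" by (metis card.empty ex_in_conv less_irrefl)
  then show ?case by (intro exI[of _ "\<lambda>_. 1"]) auto
next
  case (Suc r)
  show ?case
  proof (cases "\<forall>j\<in>J. v j r = 0")
    case True
    obtain lam where l: "\<exists>j\<in>J. lam j \<noteq> 0" "\<forall>i<r. (\<Sum>j\<in>J. lam j * v j i) = 0"
      using Suc.IH[of J v] Suc.prems by auto
    have "\<forall>i<Suc r. (\<Sum>j\<in>J. lam j * v j i) = 0"
    proof (intro allI impI)
      fix i assume "i < Suc r"
      then consider "i < r" | "i = r" by linarith
      then show "(\<Sum>j\<in>J. lam j * v j i) = 0" using l True by cases auto
    qed
    then show ?thesis using l by blast
  next
    case False
    then obtain j0 where j0: "j0 \<in> J" "v j0 r \<noteq> 0" by blast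
    define J' where "J' = J - {j0}"
    have fJ': "finite J'" and cJ': "r < card J'" using Suc.prems j0 by (auto simp: J'_def)
    define w where "w j i = v j i - (v j r / v j0 r) * v j0 i" for j i
    obtain mu where m: "\<exists>j\<in>J'. mu j \<noteq> 0" "\<forall>i<r. (\<Sum>j\<in>J'. mu j * w j i) = 0"
      using Suc.IH[OF fJ' cJ', of w] by blast
    define c where "c = (\<Sum>j\<in>J'. mu j * v j r)"
    define lam where "lam j = (if j = j0 then - c / v j0 r else mu j)" for j
    have split: "(\<Sum>j\<in>J. lam j * v j i) = lam j0 * v j0 i + (\<Sum>j\<in>J'. mu j * v j i)" for i
    proof -
      have "(\<Sum>j\<in>J. lam j * v j i) = lam j0 * v j0 i + (\<Sum>j\<in>J'. lam j * v j i)"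
        unfolding J'_def using Suc.prems(1) j0(1) by (rule sum.remove)
      also have "(\<Sum>j\<in>J'. lam j * v j i) = (\<Sum>j\<in>J'. mu j * v j i)"
        by (rule sum.cong) (auto simp: lam_def J'_def)
      finally show ?thesis .
    qed
    have "\<forall>i<Suc r. (\<Sum>j\<in>J. lam j * v j i) = 0"
    proof (intro allI impI)
      fix i assume "i < Suc r"
      then consider "i < r" | "i = r" by linarith
      then show "(\<Sum>j\<in>J. lam j * v j i) = 0"
      proof cases
        case 1
        have "(\<Sum>j\<in>J'. mu j * w j i) = (\<Sum>j\<in>J'. mu j * v j i - (mu j * v j r) * (v j0 i / v j0 r))"
          by (rule sum.cong) (simp_all add: w_def algebra_simps)
        also have "\<dots> = (\<Sum>j\<in>J'. mu j * v j i) - c * (v j0 i / v j0 r)"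
          by (simp add: sum_subtractf sum_distrib_right sum_divide_distrib c_def)
        finally have "(\<Sum>j\<in>J'. mu j * v j i) = c * (v j0 i / v j0 r)" using m(2) 1 by simp
        then show ?thesis unfolding split by (simp add: lam_def)
      next
        case 2
        then show ?thesis unfolding split using j0(2) by (simp add: lam_def c_def)
      qed
    qed
    moreover have "\<exists>j\<in>J. lam j \<noteq> 0"
      using m(1) by (auto simp: lam_def J'_def)
    ultimately show ?thesis by blast
  qed
qed


lemma qq_sym: "qq j k = qq k j"
  by (simp add: qq_def algebra_simps)

lemma core:
  fixes G :: "nat \<Rightarrow> real \<times> real \<Rightarrow> real"
  assumes d: "d \<ge> 1" and s: "s \<ge> 1"
  and diff: "\<And>i z. i < r \<Longrightarrow> G i differentiable (at z)"
  and polyres: "\<And>i j. i < r \<Longrightarrow> j \<le> d \<Longrightarrow> pf d (\<lambda>t. G i (gam j t))"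
  and ident: "\<And>z. (\<Sum>i<r. G i z ^ (2 * s)) = (\<Sum>m\<in>{0..d}. Hf d m z ^ (2 * s))"
  shows "d + 1 \<le> r"
proof -
  define e where "e i j = (SOME c. \<forall>t. G i (gam j t) = c * Hf d j (gam j t))" for i j
  have e: "G i (gam j t) = e i j * Hf d j (gam j t)" if "i < r" "j \<le> d" for i j t
  proof -
    have "\<exists>c. \<forall>t. G i (gam j t) = c * Hf d j (gam j t)"
      by (rule S1[OF s that(1) that(2) polyres[OF that] ident])
    then have "\<forall>t. G i (gam j t) = e i j * Hf d j (gam j t)"
      unfolding e_def by (rule someI_ex)
    then show ?thesis by blast
  qed
  have Hq: "Hf d m (qq j k) = 0" if "m \<le> d" "j \<le> d" "k \<le> d" "j \<noteq> k" for m j k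
  proof (cases "m = j")
    case True
    then have "Hf d m (gam k ( - (real j + real k))) = 0" using that by (intro Hf_gam_other) auto
    then show ?thesis by (simp only: gam_qq2)
  next
    case False
    then have "Hf d m (gam j ( - (real j + real k))) = 0" using that by (intro Hf_gam_other) auto
    then show ?thesis by (simp only: gam_qq1)
  qed
  have Gq: "G i (qq j k) = 0" if "i < r" "j \<le> d" "k \<le> d" "j \<noteq> k" for i j k
  proof -
    have "(\<Sum>i<r. G i (qq j k) ^ (2 * s)) = 0"
      unfolding ident using Hq that s by simp
    then show ?thesis using sum_even_pow_eq_0[where f="\<lambda>i. G i (qq j k)" and A="{..<r}" and s=s and i=i] s that by auto
  qed
  have DG: "dd (G i) (qq j k) (uj j) = e i j * dd (Hf d j) (qq j k) (uj j)"
    if "i < r" "j \<le> d" "k \<le> d" "j \<noteq> k" for i j k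
  proof -
    define t0 where "t0 = - (real j + real k)"
    have g: "gam j t0 = qq j k" unfolding t0_def by (rule gam_qq1)
    have d1: "((\<lambda>t. G i (gam j t)) has_field_derivative dd (G i) (qq j k) (uj j)) (at t0)"
      using dir_deriv[of "G i" j t0, OF diff[OF that(1)]] by (simp only: g)
    have d2: "((\<lambda>t. e i j * Hf d j (gam j t)) has_field_derivative e i j * dd (Hf d j) (qq j k) (uj j)) (at t0)"
      using DERIV_cmult[OF dir_deriv[of "Hf d j" j t0, OF Hf_diff], of "e i j"] by (simp only: g)
    have "(\<lambda>t. G i (gam j t)) = (\<lambda>t. e i j * Hf d j (gam j t))" using e that by auto
    then show ?thesis using DERIV_unique[OF d1] d2 by simp
  qed
  have DH0: "dd (Hf d m) (qq j k) (uj j) = 0"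
    if "m \<le> d" "m \<noteq> j" "j \<le> d" "k \<le> d" "j \<noteq> k" for m j k
  proof -
    define t0 where "t0 = - (real j + real k)"
    have g: "gam j t0 = qq j k" unfolding t0_def by (rule gam_qq1)
    have d1: "((\<lambda>t. Hf d m (gam j t)) has_field_derivative dd (Hf d m) (qq j k) (uj j)) (at t0)"
      using dir_deriv[of "Hf d m" j t0, OF Hf_diff] by (simp only: g)
    have "(\<lambda>t. Hf d m (gam j t)) = (\<lambda>t. 0)" using Hf_gam_other that by auto
    then have d2: "((\<lambda>t. Hf d m (gam j t)) has_field_derivative 0) (at t0)" by simp
    show ?thesis using DERIV_unique[OF d1 d2] .
  qed
  have key: "(\<Sum>i<r. e i j ^ (2 * s - 1) * e i k) = 0 \<and> (\<Sum>i<r. e i j ^ (2 * s)) = 1"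
    if jk: "j \<le> d" "k \<le> d" "j \<noteq> k" for j k
  proof -
    let ?q = "qq j k"
    define a where "a = dd (Hf d j) ?q (uj j)"
    define b where "b = dd (Hf d k) ?q (uj k)"
    have a0: "a \<noteq> 0" unfolding a_def by (rule S2c[OF jk])
    have b0: "b \<noteq> 0" using S2c[of k d j] jk qq_sym by (simp add: b_def)
    have DG2: "dd (G i) ?q (uj k) = e i k * b" if "i < r" for i
      using DG[of i k j] that jk qq_sym by (simp add: b_def)
    have DH1: "dd (Hf d j) ?q (uj k) = 0"
      using DH0[of j k j] jk qq_sym by simp
    have DH2: "dd (Hf d m) ?q (uj k) = 0" if "m \<le> d" "m \<noteq> k" for m
      using DH0[of m k j] that jk qq_sym by simp
    have L: "(\<Sum>i<r. dd (G i) ?q w ^ (2 * s)) = (\<Sum>m\<in>{0..d}. dd (Hf d m) ?q w ^ (2 * s))" for w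
      by (rule lead[where F=G and H="Hf d" and DF="\<lambda>i. dd (G i) ?q" and DH="\<lambda>m. dd (Hf d m) ?q"
            and q = ?q and I="{..<r}" and M="{0..d}" and e="2 * s"])
         (auto intro: dd_works diff Hf_diff Gq[OF _ jk] Hq[OF _ jk] ident)
    have T: "(\<Sum>i<r. (e i j + \<tau> * e i k) ^ (2 * s)) = 1 + \<tau> ^ (2 * s)" for \<tau>
    proof -
      define w where "w = (1/a) *\<^sub>R uj j + (\<tau>/b) *\<^sub>R uj k"
      have g: "dd (G i) ?q w = e i j + \<tau> * e i k" if "i < r" for i
      proof -
        have "dd (G i) ?q w = (1/a) * dd (G i) ?q (uj j) + (\<tau>/b) * dd (G i) ?q (uj k)"
          unfolding w_def by (rule dd_lin[OF diff[OF that]])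
        also have "\<dots> = (1/a) * (e i j * a) + (\<tau>/b) * (e i k * b)"
          using DG[OF that jk] DG2[OF that] by (simp add: a_def)
        also have "\<dots> = e i j + \<tau> * e i k" using a0 b0 by simp
        finally show ?thesis .
      qed
      have h: "dd (Hf d m) ?q w ^ (2 * s) = (if m = j then 1 else 0) + (if m = k then \<tau> ^ (2 * s) else 0)"
        if "m \<in> {0..d}" for m
      proof -
        have "dd (Hf d m) ?q w = (1/a) * dd (Hf d m) ?q (uj j) + (\<tau>/b) * dd (Hf d m) ?q (uj k)"
          unfolding w_def by (rule dd_lin[OF Hf_diff])
        moreover have "m = j \<Longrightarrow> dd (Hf d m) ?q (uj j) = a" by (simp add: a_def)
        moreover have "m = k \<Longrightarrow> dd (Hf d m) ?q (uj k) = b" by (simp add: b_def)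
        moreover have "m \<noteq> j \<Longrightarrow> dd (Hf d m) ?q (uj j) = 0" using DH0[of m j k] that jk by simp
        moreover have "m \<noteq> k \<Longrightarrow> dd (Hf d m) ?q (uj k) = 0" using DH2[of m] that by simp
        ultimately show ?thesis using a0 b0 jk s by auto
      qed
      have "(\<Sum>i<r. (e i j + \<tau> * e i k) ^ (2 * s)) = (\<Sum>i<r. dd (G i) ?q w ^ (2 * s))"
        using g by simp
      also have "\<dots> = (\<Sum>m\<in>{0..d}. (if m = j then 1 else 0) + (if m = k then \<tau> ^ (2 * s) else 0))"
        unfolding L using h by (rule sum.cong[OF refl])
      also have "\<dots> = 1 + \<tau> ^ (2 * s)"
        using jk by (simp add: sum.distrib)
      finally show ?thesis .
    qed
    have n1: "(\<Sum>i<r. e i j ^ (2 * s)) = 1" using T[of 0] s by simp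
    have d1: "((\<lambda>\<tau>. \<Sum>i<r. (e i j + \<tau> * e i k) ^ (2 * s)) has_field_derivative
               (\<Sum>i<r. real (2 * s) * (e i j + 0 * e i k) ^ (2 * s - 1) * e i k)) (at 0)"
      by (auto intro!: derivative_eq_intros sum.cong simp: mult_ac)
    have d2: "((\<lambda>\<tau>. 1 + \<tau> ^ (2 * s)) has_field_derivative real (2 * s) * 0 ^ (2 * s - 1)) (at (0::real))"
      by (auto intro!: derivative_eq_intros)
    have "(\<lambda>\<tau>. \<Sum>i<r. (e i j + \<tau> * e i k) ^ (2 * s)) = (\<lambda>\<tau>. 1 + \<tau> ^ (2 * s))"
      using T by auto
    then have "(\<Sum>i<r. real (2 * s) * (e i j + 0 * e i k) ^ (2 * s - 1) * e i k) = real (2 * s) * 0 ^ (2 * s - 1)"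
      using DERIV_unique[OF d1] d2 by simp
    moreover have "(0::real) ^ (2 * s - 1) = 0" using s by simp
    ultimately have "real (2 * s) * (\<Sum>i<r. e i j ^ (2 * s - 1) * e i k) = 0"
      by (simp add: sum_distrib_left mult.assoc)
    then have "(\<Sum>i<r. e i j ^ (2 * s - 1) * e i k) = 0" using s by simp
    with n1 show ?thesis by blast
  qed
  show ?thesis
  proof (rule ccontr)
    assume "\<not> d + 1 \<le> r"
    then have "r < card {0..d}" by simp
    from dep[OF _ this, of "\<lambda>j i. e i j"] obtain lam where
      lam: "\<exists>j\<in>{0..d}. lam j \<noteq> 0" "\<forall>i<r. (\<Sum>j\<in>{0..d}. lam j * e i j) = 0" by auto
    have "lam k = 0" if k: "k \<in> {0..d}" for k
    proof -
      define k' where "k' = (if k = 0 then 1 else 0::nat)"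
      have k': "k' \<le> d" "k' \<noteq> k" using d by (auto simp: k'_def)
      have nk: "(\<Sum>i<r. e i k ^ (2 * s - 1) * e i k) = 1"
      proof -
        have "(\<Sum>i<r. e i k ^ (2 * s - 1) * e i k) = (\<Sum>i<r. e i k ^ (2 * s))"
          by (rule sum.cong[OF refl]) (use s in \<open>simp add: power_Suc2[symmetric]\<close>)
        then show ?thesis using key[of k k'] k k' by simp
      qed
      have "0 = (\<Sum>i<r. e i k ^ (2 * s - 1) * (\<Sum>j\<in>{0..d}. lam j * e i j))" using lam(2) by simp
      also have "\<dots> = (\<Sum>i<r. \<Sum>j\<in>{0..d}. lam j * (e i k ^ (2 * s - 1) * e i j))"
        by (rule sum.cong[OF refl]) (simp add: sum_distrib_left sum_distrib_right mult_ac)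
      also have "\<dots> = (\<Sum>j\<in>{0..d}. lam j * (\<Sum>i<r. e i k ^ (2 * s - 1) * e i j))"
        by (subst sum.swap) (simp add: sum_distrib_left)
      also have "\<dots> = (\<Sum>j\<in>{0..d}. if j = k then lam j else 0)"
      proof (rule sum.cong[OF refl])
        fix j assume j: "j \<in> {0..d}"
        show "lam j * (\<Sum>i<r. e i k ^ (2 * s - 1) * e i j) = (if j = k then lam j else 0)"
        proof (cases "j = k")
          case True then show ?thesis using nk by simp
        next
          case False then show ?thesis using key[of k j] j k by simp
        qed
      qed
      also have "\<dots> = lam k" using k by simp
      finally show ?thesis by simp
    qed
    with lam(1) show False by blast
  qed
qed


definition ellp :: "nat \<Rightarrow> rpoly" where
  "ellp m = Poly_Mapping.single (Poly_Mapping.single 0 1) 1 + Poly_Mapping.single (Poly_Mapping.single 1 1) (real m)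
          + Poly_Mapping.single (Poly_Mapping.single 2 1) ((real m)^2)"

definition Hp :: "nat \<Rightarrow> nat \<Rightarrow> rpoly" where
  "Hp d j = prod ellp ({0..d}-{j})"

definition fd :: "nat \<Rightarrow> nat \<Rightarrow> rpoly" where
  "fd d s = sum_list (map (\<lambda>g. g ^ (2 * s)) (map (Hp d) [0..<d+1]))"

definition pt :: "real \<Rightarrow> real \<Rightarrow> nat \<Rightarrow> real" where
  "pt a b = (\<lambda>i. if i = 0 then a else if i = 1 then b else if i = 2 then 1 else 0)"

lemma is_form_ellp: "n \<ge> 3 \<Longrightarrow> is_form n 1 (ellp m)"
  unfolding ellp_def by (intro is_form_add is_form_var) auto

lemma is_form_Hp: "n \<ge> 3 \<Longrightarrow> j \<le> d \<Longrightarrow> is_form n d (Hp d j)"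
  using is_form_prod[of "{0..d}-{j}" n ellp] is_form_ellp by (simp add: Hp_def)

lemma fd_Sigma: "n \<ge> 3 \<Longrightarrow> sum_powers_rep (2 * s) n d (d+1) (fd d s)"
  unfolding sum_powers_rep_def fd_def
  by (intro exI[of _ "map (Hp d) [0..<d+1]"]) (auto intro: is_form_Hp)

lemma mv_var: "mv (Poly_Mapping.single i 1) x = x i"
  by (simp add: mv_def)

lemma ev_ellp: "ev (ellp m) (pt a b) = Lf m (a, b)"
  by (simp only: ellp_def ev_add ev_single mv_var) (simp add: pt_def Lf_def)

lemma ev_Hp: "ev (Hp d j) (pt a b) = Hf d j (a, b)"
  by (simp add: Hp_def Hf_def ev_prod ev_ellp)

lemma coord_diff: "(\<lambda>z::real\<times>real. pt (fst z) (snd z) i) differentiable (at z)"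
  by (cases "i = 0"; cases "i = 1"; cases "i = 2") (auto simp: pt_def fst_diff snd_diff)

lemma ev_diff: "(\<lambda>z::real\<times>real. ev g (pt (fst z) (snd z))) differentiable (at z)"
  unfolding ev_def mv_def
  by (intro differentiable_sum ballI differentiable_mult differentiable_const prod_diff finite_keys
        differentiable_power coord_diff)

lemma pf_coord: "pf 1 (\<lambda>t. pt (fst (gam j t)) (snd (gam j t)) i)"
proof -
  have "pt (fst (gam j t)) (snd (gam j t)) i =
    poly (if i = 0 then [: - ((real j)^2), - real j:] else if i = 1 then [:0, 1:] else if i = 2 then [:1:] else 0) t" for t
    by (simp add: pt_def gam_def)
  then show ?thesis unfolding pf_def
    by (intro exI[of _ "if i = 0 then [: - ((real j)^2), - real j:] else if i = 1 then [:0, 1:] else if i = 2 then [:1:] else 0"]) 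
       (auto simp: degree_pCons_eq_if)
qed

lemma main_bound:
  assumes n: "n \<ge> 3" and d: "d \<ge> 1" and s: "s \<ge> 1"
  and rep: "sum_powers_rep (2 * s) n d r (fd d s)"
  shows "d + 1 \<le> r"
proof -
  obtain fs where fs: "length fs = r" "\<And>g. g \<in> set fs \<Longrightarrow> is_form n d g"
    "fd d s = sum_list (map (\<lambda>g. g ^ (2 * s)) fs)"
    using rep unfolding sum_powers_rep_def by blast
  define G where "G i z = ev (fs ! i) (pt (fst z) (snd z))" for i z
  show ?thesis
  proof (rule core[where G=G and s=s])
    show "1 \<le> d" "1 \<le> s" using d s by auto
    show "G i differentiable at z" if "i < r" for i z
      unfolding G_def[abs_def] by (rule ev_diff)
    show "pf d (\<lambda>t. G i (gam j t))" if "i < r" "j \<le> d" for i j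
    proof -
      have "fs ! i \<in> set fs" using that fs(1) by simp
      then have f: "is_form n d (fs ! i)" by (rule fs(2))
      show ?thesis unfolding G_def
        by (rule pf_ev[OF pf_coord]) (use f in \<open>auto simp: is_form_def\<close>)
    qed
    show "(\<Sum>i<r. G i z ^ (2 * s)) = (\<Sum>m\<in>{0..d}. Hf d m z ^ (2 * s))" for z
    proof -
      obtain a b where z: "z = (a, b)" by (cases z)
      have "(\<Sum>i<r. G i z ^ (2 * s)) = ev (sum_list (map (\<lambda>g. g ^ (2 * s)) fs)) (pt a b)"
        by (simp add: ev_sum_list ev_power G_def z fs(1))
      also have "\<dots> = ev (fd d s) (pt a b)" by (simp add: fs(3))
      also have "\<dots> = (\<Sum>i<d+1. Hf d i (a, b) ^ (2 * s))"
        unfolding fd_def map_map ev_sum_list by (intro sum.cong) (simp_all add: ev_power ev_Hp del: upt_Suc)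
      also have "\<dots> = (\<Sum>m\<in>{0..d}. Hf d m z ^ (2 * s))"
        by (simp add: z atLeast0AtMost lessThan_Suc_atMost)
      finally show ?thesis .
    qed
  qed
qed

theorem mainTheorem6:
  fixes n s :: nat
  assumes "n \<ge> 3" and "s \<ge> 1"
  shows "\<forall>N::nat. \<forall>\<^sub>F d in sequentially. enat N \<le> pyth (2 * s) n d"
proof
  fix N :: nat
  show "\<forall>\<^sub>F d in sequentially. enat N \<le> pyth (2 * s) n d"
  proof (rule eventually_sequentiallyI[of "max 1 N"])
    fix d assume dN: "max 1 N \<le> d"
    show "enat N \<le> pyth (2 * s) n d"
      unfolding pyth_def
    proof (rule Inf_greatest)
      fix x assume "x \<in> {enat l |l. \<forall>f\<in>SigmaPow (2 * s) n d. \<exists>r\<le>l. sum_powers_rep (2 * s) n d r f}"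
      then obtain l where x: "x = enat l" and l: "\<forall>f\<in>SigmaPow (2 * s) n d. \<exists>r\<le>l. sum_powers_rep (2 * s) n d r f"
        by blast
      have "fd d s \<in> SigmaPow (2 * s) n d"
        unfolding SigmaPow_def using fd_Sigma[OF assms(1)] by blast
      then obtain r where r: "r \<le> l" "sum_powers_rep (2 * s) n d r (fd d s)" using l by blast
      have "d + 1 \<le> r" by (rule main_bound[OF assms(1) _ assms(2) r(2)]) (use dN in auto)
      then show "enat N \<le> x" using r(1) dN x by simp
    qed
  qed
qed

end
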